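(* For every $\omega\in S$ and every $\epsilon>0$ there exist $\omega'\in S$ with $|\omega'-\omega|<\epsilon$ and a Seifert matrix $V$ such that $\Delta_V(t)$ has exactly two nonreal roots, namely $\omega'$ and $\bar\omega'$, both simple and lying on the unit circle. Consequently, as a function of $\zeta\in S$, $\sigma_\zeta(V)=0$ whenever $\mathrm{Re}\,\zeta>\mathrm{Re}\,\omega'$, and $\sigma_\zeta(V)$ equals a nonzero constant whenever $\mathrm{Re}\,\zeta<\mathrm{Re}\,\omega'$.
   Context: A Seifert matrix is a square integral matrix $V$ with $\det(V-V^T)=\pm1$; $\Delta_V(t)=\det(V-tV^T)$; for a unit complex number $\zeta$, $\sigma_\zeta(V)$ is the signature of $(1-\zeta)V+(1-\bar\zeta)V^T$. $S$ is the set of unit complex numbers with positive imaginary part. *)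

theory Defs
  imports "Jordan_Normal_Form.Char_Poly"
begin

definition S_set :: "complex set" where
  "S_set = {z. cmod z = 1 \<and> Im z > 0}"

definition seifert_matrix :: "int mat \<Rightarrow> bool" where
  "seifert_matrix V \<longleftrightarrow> dim_row V = dim_col V \<and>
     (det (V - transpose_mat V) = 1 \<or> det (V - transpose_mat V) = -1)"

definition alexander_poly :: "int mat \<Rightarrow> int poly" where
  "alexander_poly V = det (map_mat (\<lambda>a. [:a:]) V - map_mat (\<lambda>a. [:0, a:]) (transpose_mat V))"

definition signature :: "complex mat \<Rightarrow> int" where
  "signature A =
     int (\<Sum>x\<in>{x. poly (char_poly A) x = 0 \<and> Im x = 0 \<and> Re x > 0}. order x (char_poly A))
   - int (\<Sum>x\<in>{x. poly (char_poly A) x = 0 \<and> Im x = 0 \<and> Re x < 0}. order x (char_poly A))"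

definition tl_signature :: "complex \<Rightarrow> int mat \<Rightarrow> int" where
  "tl_signature \<zeta> V =
     (let W = map_mat of_int V :: complex mat
      in signature ((1 - \<zeta>) \<cdot>\<^sub>m W + (1 - cnj \<zeta>) \<cdot>\<^sub>m transpose_mat W))"

end

theory Submission
  imports Defs
begin

lemma det2: assumes "A \<in> carrier_mat 2 2"
  shows "det A = A$$(0,0)*A$$(1,1) - A$$(0,1)*A$$(1,0)"
  using assms
  apply (subst laplace_expansion_column[OF assms, of 0])
  apply (auto simp: cofactor_def numeral_2_eq_2 lessThan_Suc mat_delete_def det_single)
  done

lemma less4: "(i::nat) < 4 \<longleftrightarrow> i = 0 \<or> i = 1 \<or> i = 2 \<or> i = 3" by auto
lemma less2: "(i::nat) < 2 \<longleftrightarrow> i = 0 \<or> i = 1" by auto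

definition Vm :: "int \<Rightarrow> int \<Rightarrow> int mat" where
 "Vm T q = mat 4 4 (\<lambda>(i,j). [[T,q,1,0],[q,0,0,1],[0,0,1,0],[0,0,0,1]] ! i ! j)"

lemma Vm_carrier[simp]: "Vm T q \<in> carrier_mat 4 4" by (simp add: Vm_def)

lemma seifert_Vm: "seifert_matrix (Vm T q)"
proof -
  let ?M = "four_block_mat (0\<^sub>m 2 2) (1\<^sub>m 2) (- 1\<^sub>m 2) (0\<^sub>m 2 2) :: int mat"
  have eq: "Vm T q - transpose_mat (Vm T q) = ?M"
    by (rule eq_matI) (auto simp: Vm_def less4 less2)
  have "det ?M = det (0\<^sub>m 2 2 * 0\<^sub>m 2 2 - 1\<^sub>m 2 * (- 1\<^sub>m 2) :: int mat)"
    by (rule det_four_block_mat) auto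
  also have "\<dots> = 1" by (subst det2) auto
  finally show ?thesis unfolding seifert_matrix_def eq by (simp add: Vm_def)
qed

lemma hom_poly_eval: "poly (det A) x = det (map_mat (\<lambda>p. poly p x) A)"
  by (rule comm_ring_hom.hom_det[symmetric]) (unfold_locales, auto)

lemma hom_of_int_poly: "map_poly (of_int :: int \<Rightarrow> complex) (det A) = det (map_mat (map_poly of_int) A)"
  by (rule comm_ring_hom.hom_det[symmetric]) (unfold_locales, auto simp: of_int_poly_hom.hom_mult)

lemma poly_oi2: "poly (map_poly (of_int::int\<Rightarrow>complex) [:a, b:]) z = of_int a + z * of_int b"
  by (cases "b = 0"; cases "a = 0") (auto simp: map_poly_pCons)

lemma alex_eval: "poly (map_poly (of_int::int\<Rightarrow>complex) (alexander_poly (Vm T q))) z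
   = ((1-z)^2*of_int T + z)*z - (1-z)^4*(of_int q)^2"
proof -
  let ?A = "mat 2 2 (\<lambda>(i,j). [[(1-z)*of_int T, (1-z)*of_int q],[(1-z)*of_int q, 0]] ! i ! j)"
  let ?M = "four_block_mat ?A (1\<^sub>m 2) ((-z) \<cdot>\<^sub>m 1\<^sub>m 2) ((1-z) \<cdot>\<^sub>m 1\<^sub>m 2)"
  have "poly (map_poly (of_int::int\<Rightarrow>complex) (alexander_poly (Vm T q))) z
     = det (map_mat (\<lambda>p. poly p z) (map_mat (map_poly of_int) 
         (map_mat (\<lambda>a. [:a:]) (Vm T q) - map_mat (\<lambda>a. [:0, a:]) (transpose_mat (Vm T q)))))"
    unfolding alexander_poly_def hom_of_int_poly hom_poly_eval ..
  also have "map_mat (\<lambda>p. poly p z) (map_mat (map_poly of_int) 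
         (map_mat (\<lambda>a. [:a:]) (Vm T q) - map_mat (\<lambda>a. [:0, a:]) (transpose_mat (Vm T q)))) = ?M"
    by (rule eq_matI) (auto simp: Vm_def less4 less2 of_int_poly_hom.hom_minus poly_oi2 algebra_simps)
  also have "det ?M = det (?A * ((1-z) \<cdot>\<^sub>m 1\<^sub>m 2) - 1\<^sub>m 2 * ((-z) \<cdot>\<^sub>m 1\<^sub>m 2))"
    by (rule det_four_block_mat) auto
  also have "\<dots> = ((1-z)^2*of_int T + z)*z - (1-z)^4*(of_int q)^2"
    by (subst det2) (auto simp: power2_eq_square power4_eq_xxxx algebra_simps)
  finally show ?thesis .
qed

definition Hm :: "complex \<Rightarrow> int \<Rightarrow> int \<Rightarrow> complex mat" where
  "Hm \<zeta> T q = (let W = map_mat of_int (Vm T q) :: complex mat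
      in (1 - \<zeta>) \<cdot>\<^sub>m W + (1 - cnj \<zeta>) \<cdot>\<^sub>m transpose_mat W)"

lemma tl_Hm: "tl_signature \<zeta> (Vm T q) = signature (Hm \<zeta> T q)"
  unfolding tl_signature_def Hm_def by (simp add: Let_def)

lemma Hm_explicit: fixes \<zeta> :: complex
  shows "Hm \<zeta> T q = mat 4 4 (\<lambda>(i,j). [[((1-\<zeta>) + (1 - cnj \<zeta>))*of_int T, ((1-\<zeta>) + (1 - cnj \<zeta>))*of_int q, 1-\<zeta>, 0],
     [((1-\<zeta>) + (1 - cnj \<zeta>))*of_int q, 0, 0, 1-\<zeta>],[1 - cnj \<zeta>, 0, ((1-\<zeta>) + (1 - cnj \<zeta>)), 0],
     [0, 1-cnj \<zeta>, 0, ((1-\<zeta>) + (1 - cnj \<zeta>))]] ! i ! j)"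
  by (rule eq_matI) (auto simp: Hm_def Let_def Vm_def less4 less2 algebra_simps)

lemma charpoly_eval: fixes \<zeta> x :: complex
  defines "u \<equiv> (1-\<zeta>) + (1 - cnj \<zeta>)" and "k \<equiv> (1-\<zeta>) * (1 - cnj \<zeta>)"
  shows "poly (char_poly (Hm \<zeta> T q)) x = 
    ((x-u)*(x-u*of_int T) - k)*((x-u)*x - k) - (x-u)^2*u^2*(of_int q)^2"
proof -
  let ?A = "mat 2 2 (\<lambda>(i,j). [[x - u*of_int T, -u*of_int q],[-u*of_int q, x]] ! i ! j)"
  let ?M = "four_block_mat ?A ((-(1-\<zeta>)) \<cdot>\<^sub>m 1\<^sub>m 2) ((-(1-cnj \<zeta>)) \<cdot>\<^sub>m 1\<^sub>m 2) ((x-u) \<cdot>\<^sub>m 1\<^sub>m 2)"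
  have "poly (char_poly (Hm \<zeta> T q)) x = det (map_mat (\<lambda>p. poly p x) (char_poly_matrix (Hm \<zeta> T q)))"
    unfolding char_poly_def hom_poly_eval ..
  also have "map_mat (\<lambda>p. poly p x) (char_poly_matrix (Hm \<zeta> T q)) = ?M"
    unfolding Hm_explicit by (rule eq_matI) (auto simp: char_poly_matrix_def less4 less2 u_def algebra_simps)
  also have "det ?M = det (?A * ((x-u) \<cdot>\<^sub>m 1\<^sub>m 2) - ((-(1-\<zeta>)) \<cdot>\<^sub>m 1\<^sub>m 2) * ((-(1-cnj \<zeta>)) \<cdot>\<^sub>m 1\<^sub>m 2))"
    by (rule det_four_block_mat) auto
  also have "\<dots> = ((x-u)*(x-u*of_int T) - k)*((x-u)*x - k) - (x-u)^2*u^2*(of_int q)^2"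
    by (subst det2) (auto simp: power2_eq_square k_def algebra_simps)
  finally show ?thesis .
qed


definition cnt :: "(complex \<Rightarrow> bool) \<Rightarrow> complex poly \<Rightarrow> nat" where
  "cnt P p = (\<Sum>x\<in>{x. poly p x = 0 \<and> P x}. order x p)"

lemma cnt_mult: assumes p: "p \<noteq> 0" and q: "q \<noteq> 0"
  shows "cnt P (p*q) = cnt P p + cnt P q"
proof -
  let ?A = "{x. poly p x = 0 \<and> P x}" and ?B = "{x. poly q x = 0 \<and> P x}"
  have fA: "finite ?A" using poly_roots_finite[OF p] by (rule finite_subset[rotated]) auto
  have fB: "finite ?B" using poly_roots_finite[OF q] by (rule finite_subset[rotated]) auto
  have pq: "p * q \<noteq> 0" using p q by simp
  have U: "{x. poly (p*q) x = 0 \<and> P x} = ?A \<union> ?B" by auto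
  have "cnt P (p*q) = (\<Sum>x\<in>?A \<union> ?B. order x p + order x q)"
    unfolding cnt_def U using order_mult[OF pq] by simp
  also have "\<dots> = (\<Sum>x\<in>?A \<union> ?B. order x p) + (\<Sum>x\<in>?A \<union> ?B. order x q)"
    by (rule sum.distrib)
  also have "(\<Sum>x\<in>?A \<union> ?B. order x p) = (\<Sum>x\<in>?A. order x p)"
    by (rule sum.mono_neutral_right) (use fA fB in \<open>auto simp: order_root\<close>)
  also have "(\<Sum>x\<in>?A \<union> ?B. order x q) = (\<Sum>x\<in>?B. order x q)"
    by (rule sum.mono_neutral_right) (use fA fB in \<open>auto simp: order_root\<close>)
  finally show ?thesis unfolding cnt_def .
qed

lemma cnt_lin: "cnt P [:-a, 1:] = (if P a then 1 else 0)"
proof -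
  have "{x. poly [:-a, 1:] x = 0 \<and> P x} = (if P a then {a} else {})" by auto
  thus ?thesis unfolding cnt_def by (auto simp: order_linear)
qed

definition sg :: "complex poly \<Rightarrow> int" where
  "sg p = int (cnt (\<lambda>x. Im x = 0 \<and> Re x > 0) p) - int (cnt (\<lambda>x. Im x = 0 \<and> Re x < 0) p)"

lemma signature_sg: "signature A = sg (char_poly A)"
  unfolding signature_def sg_def cnt_def by (simp add: conj_assoc)

definition sgi :: "real \<Rightarrow> int" where "sgi r = (if r > 0 then 1 else if r < 0 then -1 else 0)"

lemma sg_prod: "sg (\<Prod>r\<leftarrow>rs. [:-complex_of_real r, 1:]) = (\<Sum>r\<leftarrow>rs. sgi r)"
proof (induction rs)
  case Nil
  have "cnt P 1 = 0" for P unfolding cnt_def by simp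
  then show ?case unfolding sg_def by simp
next
  case (Cons r rs)
  have lz: "[:-complex_of_real r, 1:] \<noteq> 0" by simp
  have nz: "(\<Prod>r\<leftarrow>rs. [:-complex_of_real r, 1:]) \<noteq> 0"
    by (subst prod_list_zero_iff) auto
  have "sg (\<Prod>r\<leftarrow>r#rs. [:-complex_of_real r, 1:]) = sg [:-complex_of_real r, 1:] + sg (\<Prod>r\<leftarrow>rs. [:-complex_of_real r, 1:])"
    using nz by (simp only: list.map prod_list.Cons sg_def cnt_mult[OF lz nz] of_nat_add)
  also have "sg [:-complex_of_real r, 1:] = sgi r"
    unfolding sg_def cnt_lin sgi_def by auto
  finally show ?case using Cons by simp
qed

lemma quad_fact: fixes B P :: real and x :: complex
  assumes "B^2 - 4*P \<ge> 0"
  shows "(x - of_real ((B + sqrt (B^2 - 4*P))/2)) * (x - of_real ((B - sqrt (B^2 - 4*P))/2))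
       = x^2 - of_real B * x + of_real P"
proof -
  define r1 where "r1 = (B + sqrt (B^2 - 4*P))/2"
  define r2 where "r2 = (B - sqrt (B^2 - 4*P))/2"
  have s: "(sqrt (B^2 - 4*P))^2 = B^2 - 4*P" using assms by simp
  have e: "(x - of_real r1)*(x - of_real r2) = x^2 - of_real (r1+r2)*x + of_real (r1*r2)"
    by (simp add: algebra_simps power2_eq_square)
  have "r1 + r2 = B" unfolding r1_def r2_def by (simp add: field_simps)
  moreover have "r1 * r2 = (B^2 - (sqrt (B^2 - 4*P))^2)/4" unfolding r1_def r2_def
    by (simp add: field_simps power2_eq_square)
  ultimately show ?thesis using e unfolding s r1_def[symmetric] r2_def[symmetric] by simp
qed

lemma quad_neg: fixes B P :: real assumes "P < 0"
  shows "sgi ((B + sqrt (B^2 - 4*P))/2) + sgi ((B - sqrt (B^2 - 4*P))/2) = 0"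
proof -
  have "sqrt (B^2) < sqrt (B^2 - 4*P)" using assms by (intro real_sqrt_less_mono) auto
  hence "\<bar>B\<bar> < sqrt (B^2 - 4*P)" by simp
  hence "(B + sqrt (B^2 - 4*P))/2 > 0" "(B - sqrt (B^2 - 4*P))/2 < 0" by auto
  thus ?thesis unfolding sgi_def by auto
qed

lemma quad_pos: fixes B P :: real assumes "P > 0" "B > 0" "B^2 - 4*P \<ge> 0"
  shows "sgi ((B + sqrt (B^2 - 4*P))/2) + sgi ((B - sqrt (B^2 - 4*P))/2) = 2"
proof -
  have "sqrt (B^2 - 4*P) < sqrt (B^2)" using assms by (intro real_sqrt_less_mono) auto
  moreover have "sqrt (B^2) = B" using assms(2) by simp
  ultimately have a1: "sqrt (B^2 - 4*P) < B" by linarith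
  have a2: "sqrt (B^2 - 4*P) \<ge> 0" using assms(3) by simp
  have "B + sqrt (B^2 - 4*P) > 0" using a1 a2 by linarith
  moreover have "B - sqrt (B^2 - 4*P) > 0" using a1 by linarith
  ultimately have "(B + sqrt (B^2 - 4*P))/2 > 0" "(B - sqrt (B^2 - 4*P))/2 > 0" by simp_all
  thus ?thesis unfolding sgi_def by auto
qed

lemma ring_id: fixes x u t q2 a b :: "'a::comm_ring_1"
  assumes "t = a + b" "q2 = - (a*b)"
  shows "((x-u)*(x-u*t) - u)*((x-u)*x - u) - (x-u)^2*u^2*q2
     = (x^2 - u*(1+a)*x + (u^2*a - u)) * (x^2 - u*(1+b)*x + (u^2*b - u))"
  unfolding assms by (simp add: algebra_simps power2_eq_square)


definition rp :: "real \<Rightarrow> real \<Rightarrow> real" where "rp B P = (B + sqrt (B^2 - 4*P))/2"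
definition rm :: "real \<Rightarrow> real \<Rightarrow> real" where "rm B P = (B - sqrt (B^2 - 4*P))/2"

lemma poly_lin_prod: "poly (\<Prod>r\<leftarrow>rs. [:-complex_of_real r, 1:]) x = (\<Prod>r\<leftarrow>rs. (x - of_real r))"
  by (induction rs) (auto simp: algebra_simps)

lemma sig_Hm:
  fixes \<zeta> :: complex and \<xi>1 \<xi>2 :: real
  assumes z: "\<zeta> \<in> S_set" and s: "\<xi>1 + \<xi>2 = of_int T" and p: "\<xi>1 * \<xi>2 = - ((of_int q)^2)"
  defines "u \<equiv> 2 - 2 * Re \<zeta>"
  shows "signature (Hm \<zeta> T q) = sgi (rp (u*(1+\<xi>1)) (u^2*\<xi>1 - u)) + sgi (rm (u*(1+\<xi>1)) (u^2*\<xi>1 - u))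
      + (sgi (rp (u*(1+\<xi>2)) (u^2*\<xi>2 - u)) + sgi (rm (u*(1+\<xi>2)) (u^2*\<xi>2 - u)))"
proof -
  have cz: "cmod \<zeta> = 1" using z unfolding S_set_def by auto
  have zc: "\<zeta> * cnj \<zeta> = 1" using cz by (simp add: complex_mult_cnj cmod_def)
  have e1: "(1-\<zeta>) + (1 - cnj \<zeta>) = complex_of_real u" unfolding u_def
    by (simp add: complex_eq_iff)
  have e2: "(1-\<zeta>) * (1 - cnj \<zeta>) = complex_of_real u"
  proof -
    have "(1-\<zeta>) * (1 - cnj \<zeta>) = 1 - (\<zeta> + cnj \<zeta>) + \<zeta> * cnj \<zeta>" by (simp add: algebra_simps)
    also have "\<dots> = complex_of_real u" unfolding zc u_def complex_add_cnj by simp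
    finally show ?thesis .
  qed
  have disc: "(u*(1+\<xi>))^2 - 4*(u^2*\<xi> - u) \<ge> 0" if "u \<ge> 0" for \<xi>
  proof -
    have h: "(u*(1+\<xi>))^2 - 4*(u^2*\<xi> - u) = (u*(1-\<xi>))^2 + 4*u" by (simp add: power2_eq_square algebra_simps)
    have "(u*(1-\<xi>))^2 \<ge> 0" by simp
    thus ?thesis using h that by linarith
  qed
  have u0: "u \<ge> 0" unfolding u_def using cz abs_Re_le_cmod[of \<zeta>] by simp
  let ?rs = "[rp (u*(1+\<xi>1)) (u^2*\<xi>1 - u), rm (u*(1+\<xi>1)) (u^2*\<xi>1 - u),
              rp (u*(1+\<xi>2)) (u^2*\<xi>2 - u), rm (u*(1+\<xi>2)) (u^2*\<xi>2 - u)]"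
  have cp: "char_poly (Hm \<zeta> T q) = (\<Prod>r\<leftarrow>?rs. [:-complex_of_real r, 1:])"
  proof (rule poly_eq_poly_eq_iff[THEN iffD1], rule ext)
    fix x :: complex
    have "poly (char_poly (Hm \<zeta> T q)) x = 
      ((x-of_real u)*(x-of_real u*of_int T) - of_real u)*((x-of_real u)*x - of_real u) 
        - (x-of_real u)^2*(of_real u)^2*(of_int q)^2"
      unfolding charpoly_eval e1 e2 ..
    also have "\<dots> = (x^2 - of_real u*(1+of_real \<xi>1)*x + (of_real u^2*of_real \<xi>1 - of_real u)) 
       * (x^2 - of_real u*(1+of_real \<xi>2)*x + (of_real u^2*of_real \<xi>2 - of_real u))"
    proof (rule ring_id)
      show "complex_of_int T = of_real \<xi>1 + of_real \<xi>2" using arg_cong[OF s, of complex_of_real] by simp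
      show "(complex_of_int q)^2 = - (of_real \<xi>1 * of_real \<xi>2)" using arg_cong[OF p, of complex_of_real] by simp
    qed
    also have "\<dots> = (x^2 - of_real (u*(1+\<xi>1))*x + of_real (u^2*\<xi>1 - u)) 
       * (x^2 - of_real (u*(1+\<xi>2))*x + of_real (u^2*\<xi>2 - u))" by simp
    also have "\<dots> = poly (\<Prod>r\<leftarrow>?rs. [:-complex_of_real r, 1:]) x"
      unfolding quad_fact[OF disc[OF u0], symmetric] rp_def rm_def poly_lin_prod by (simp add: mult.assoc)
    finally show "poly (char_poly (Hm \<zeta> T q)) x = poly (\<Prod>r\<leftarrow>?rs. [:-complex_of_real r, 1:]) x" .
  qed
  show ?thesis unfolding signature_sg cp sg_prod by simp
qed

lemma ring_id2: fixes z t q2 a b :: "'a::comm_ring_1"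
  assumes "t = a + b" "q2 = - (a*b)"
  shows "((1-z)^2*t + z)*z - (1-z)^4*q2 = (a*(1-z)^2 + z) * (b*(1-z)^2 + z)"
  unfolding assms by (simp add: algebra_simps power2_eq_square power4_eq_xxxx)

lemma alex_fact:
  fixes \<xi>1 \<xi>2 :: real
  assumes s: "\<xi>1 + \<xi>2 = of_int T" and p: "\<xi>1 * \<xi>2 = - ((of_int q)^2)"
    and x1: "\<xi>1 > 1/4" and x2: "\<xi>2 < 0"
  defines "c \<equiv> 1 - 1/(2*\<xi>1)"
  defines "w \<equiv> Complex c (sqrt (1 - c^2))"
  defines "s2 \<equiv> 2 - 1/\<xi>2"
  shows "map_poly (of_int::int\<Rightarrow>complex) (alexander_poly (Vm T q)) = 
     Polynomial.smult (of_real (\<xi>1*\<xi>2)) ([:-w,1:] * [:-cnj w,1:] * [:-of_real (rp s2 1),1:] * [:-of_real (rm s2 1),1:])"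
proof (rule poly_eq_poly_eq_iff[THEN iffD1], rule ext)
  fix z :: complex
  have c1: "c^2 < 1" 
  proof -
    have "1/(2*\<xi>1) > 0" "1/(2*\<xi>1) < 2" using x1 by (auto simp: field_simps)
    hence "-1 < c" "c < 1" unfolding c_def by auto
    thus ?thesis by (simp add: abs_square_less_1)
  qed
  have ww: "w * cnj w = 1" unfolding w_def using c1 
    by (simp add: complex_eq_iff power2_eq_square[symmetric])
  have wa: "w + cnj w = of_real (2*c)" unfolding w_def by (simp add: complex_eq_iff)
  have d2: "s2^2 - 4*1 \<ge> 0"
  proof -
    have "1/\<xi>2 < 0" using x2 by simp
    hence "s2 > 2" unfolding s2_def by simp
    hence "s2^2 > 2^2" by (intro power_strict_mono) auto
    thus ?thesis by simp
  qed
  have "poly (map_poly (of_int::int\<Rightarrow>complex) (alexander_poly (Vm T q))) z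
     = (of_real \<xi>1*(1-z)^2 + z) * (of_real \<xi>2*(1-z)^2 + z)"
    unfolding alex_eval
  proof (rule ring_id2)
    show "complex_of_int T = of_real \<xi>1 + of_real \<xi>2" using arg_cong[OF s, of complex_of_real] by simp
    show "(complex_of_int q)^2 = - (of_real \<xi>1 * of_real \<xi>2)" using arg_cong[OF p, of complex_of_real] by simp
  qed
  also have "of_real \<xi>1*(1-z)^2 + z = of_real \<xi>1 * ((z - w) * (z - cnj w))"
  proof -
    have "(z - w) * (z - cnj w) = z^2 - (w + cnj w) * z + w * cnj w" by (simp add: algebra_simps power2_eq_square)
    also have "\<dots> = z^2 - of_real (2*c) * z + 1" unfolding ww wa ..
    finally have e: "(z - w) * (z - cnj w) = z^2 - of_real (2*c) * z + 1" .
    have "\<xi>1 * (2*c) = 2*\<xi>1 - 1" unfolding c_def using x1 by (simp add: field_simps)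
    hence k: "complex_of_real \<xi>1 * of_real (2*c) = 2 * of_real \<xi>1 - 1"
      by (metis of_real_1 of_real_diff of_real_mult of_real_numeral)
    have "of_real \<xi>1 * (z^2 - of_real (2*c)*z + 1) = of_real \<xi>1 * z^2 - (complex_of_real \<xi>1 * of_real (2*c))*z + of_real \<xi>1"
      by (simp add: algebra_simps)
    also have "\<dots> = of_real \<xi>1*(1-z)^2 + z" unfolding k by (simp add: algebra_simps power2_eq_square)
    finally show ?thesis unfolding e by simp
  qed
  also have "of_real \<xi>2*(1-z)^2 + z = of_real \<xi>2 * ((z - of_real (rp s2 1)) * (z - of_real (rm s2 1)))"
  proof -
    have e: "(z - of_real (rp s2 1)) * (z - of_real (rm s2 1)) = z^2 - of_real s2 * z + of_real 1"
      unfolding rp_def rm_def by (rule quad_fact[OF d2])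
    have "\<xi>2 * s2 = 2*\<xi>2 - 1" unfolding s2_def using x2 by (simp add: field_simps)
    hence k: "complex_of_real \<xi>2 * of_real s2 = 2 * of_real \<xi>2 - 1"
      by (metis of_real_1 of_real_diff of_real_mult of_real_numeral)
    have "of_real \<xi>2 * (z^2 - of_real s2*z + of_real 1) = of_real \<xi>2 * z^2 - (complex_of_real \<xi>2 * of_real s2)*z + of_real \<xi>2"
      by (simp add: algebra_simps)
    also have "\<dots> = of_real \<xi>2*(1-z)^2 + z" unfolding k by (simp add: algebra_simps power2_eq_square)
    finally show ?thesis unfolding e by simp
  qed
  also have "of_real \<xi>1 * ((z - w) * (z - cnj w)) * (of_real \<xi>2 * ((z - of_real (rp s2 1)) * (z - of_real (rm s2 1))))
     = poly (Polynomial.smult (of_real (\<xi>1*\<xi>2)) ([:-w,1:] * [:-cnj w,1:] * [:-of_real (rp s2 1),1:] * [:-of_real (rm s2 1),1:])) z"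
    by (simp add: algebra_simps)
  finally show "poly (map_poly (of_int::int\<Rightarrow>complex) (alexander_poly (Vm T q))) z = 
     poly (Polynomial.smult (of_real (\<xi>1*\<xi>2)) ([:-w,1:] * [:-cnj w,1:] * [:-of_real (rp s2 1),1:] * [:-of_real (rm s2 1),1:])) z" .
qed

lemma poly_lin: "poly [:-a, 1:] z = z - (a::complex)" by simp

lemma order4: fixes k a b c d x :: complex assumes k: "k \<noteq> 0"
  shows "order x (Polynomial.smult k ([:-a,1:]*[:-b,1:]*[:-c,1:]*[:-d,1:])) =
    (if a = x then 1 else 0) + (if b = x then 1 else 0) + (if c = x then 1 else 0) + (if d = x then 1 else 0)"
proof -
  have n2: "[:-a,1:]*[:-b,1:] \<noteq> 0" by (simp only: mult_eq_0_iff pCons_eq_0_iff one_neq_zero simp_thms)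
  have n3: "[:-a,1:]*[:-b,1:]*[:-c,1:] \<noteq> 0" by (simp only: mult_eq_0_iff pCons_eq_0_iff one_neq_zero simp_thms)
  have n4: "[:-a,1:]*[:-b,1:]*[:-c,1:]*[:-d,1:] \<noteq> 0" by (simp only: mult_eq_0_iff pCons_eq_0_iff one_neq_zero simp_thms)
  show ?thesis
    by (simp only: order_smult[OF k] order_mult[OF n2] order_mult[OF n3] order_mult[OF n4] order_linear' neg_equal_iff_equal)
qed

lemma alex_props:
  fixes \<xi>1 \<xi>2 :: real
  assumes s: "\<xi>1 + \<xi>2 = of_int T" and p: "\<xi>1 * \<xi>2 = - ((of_int q)^2)"
    and x1: "\<xi>1 > 1/4" and x2: "\<xi>2 < 0"
  defines "c \<equiv> 1 - 1/(2*\<xi>1)"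
  defines "w \<equiv> Complex c (sqrt (1 - c^2))"
  defines "D \<equiv> map_poly (of_int::int\<Rightarrow>complex) (alexander_poly (Vm T q))"
  shows "{z. poly D z = 0 \<and> Im z \<noteq> 0} = {w, cnj w} \<and> order w D = 1 \<and> order (cnj w) D = 1
     \<and> cmod w = 1 \<and> Im w > 0 \<and> Re w = c"
proof -
  define s2 where "s2 = 2 - 1/\<xi>2"
  have c1: "c^2 < 1" 
  proof -
    have "1/(2*\<xi>1) > 0" "1/(2*\<xi>1) < 2" using x1 by (auto simp: field_simps)
    hence "-1 < c" "c < 1" unfolding c_def by auto
    thus ?thesis by (simp add: abs_square_less_1)
  qed
  have Iw: "Im w > 0" unfolding w_def using c1 by simp
  have Iw': "Im (cnj w) \<noteq> 0" using Iw by simp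
  have cw: "cmod w = 1" unfolding w_def cmod_def using c1 by simp
  have ne1: "cnj w \<noteq> w" using Iw by (metis Reals_cnj_iff complex_is_Real_iff less_irrefl)
  have ne2: "complex_of_real r \<noteq> w" for r using Iw by auto
  have ne3: "complex_of_real r \<noteq> cnj w" for r
  proof
    assume "complex_of_real r = cnj w"
    hence "Im (complex_of_real r) = Im (cnj w)" by simp
    thus False using Iw' by simp
  qed
  have k0: "\<xi>1 * \<xi>2 \<noteq> 0" using x1 x2 by auto
  hence k0': "complex_of_real (\<xi>1 * \<xi>2) \<noteq> 0" by simp
  have DD: "D = Polynomial.smult (of_real (\<xi>1*\<xi>2)) ([:-w,1:] * [:-cnj w,1:] * [:-of_real (rp s2 1),1:] * [:-of_real (rm s2 1),1:])"
    unfolding D_def w_def c_def s2_def by (rule alex_fact[OF s p x1 x2])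
  have pD: "poly D z = 0 \<longleftrightarrow> z = w \<or> z = cnj w \<or> z = of_real (rp s2 1) \<or> z = of_real (rm s2 1)" for z
  proof -
    have "poly D z = of_real (\<xi>1*\<xi>2) * ((z - w) * (z - cnj w) * (z - of_real (rp s2 1)) * (z - of_real (rm s2 1)))"
      unfolding DD by (simp only: poly_smult poly_mult poly_lin)
    thus ?thesis using k0 by simp
  qed
  have "{z. poly D z = 0 \<and> Im z \<noteq> 0} = {w, cnj w}"
    unfolding pD using Iw Iw' by auto
  moreover have "order w D = 1" unfolding DD order4[OF k0'] using ne1 ne2 by auto
  moreover have "order (cnj w) D = 1" unfolding DD order4[OF k0'] using ne1 ne3 by (auto simp: ne1[symmetric])
  moreover have "Re w = c" unfolding w_def by simp
  ultimately show ?thesis using cw Iw by blast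
qed

lemma disc_ok: fixes u \<xi> :: real assumes "u \<ge> 0" shows "(u*(1+\<xi>))^2 - 4*(u^2*\<xi> - u) \<ge> 0"
proof -
  have h: "(u*(1+\<xi>))^2 - 4*(u^2*\<xi> - u) = (u*(1-\<xi>))^2 + 4*u" by (simp add: power2_eq_square algebra_simps)
  have "(u*(1-\<xi>))^2 \<ge> 0" by simp
  thus ?thesis using h assms by linarith
qed

lemma S_Re: assumes "\<zeta> \<in> S_set" shows "Re \<zeta> < 1" "Re \<zeta> > -1"
proof -
  have "cmod \<zeta> = 1" "Im \<zeta> > 0" using assms unfolding S_set_def by auto
  hence "(Re \<zeta>)^2 + (Im \<zeta>)^2 = 1" "(Im \<zeta>)^2 > 0" unfolding cmod_def by (auto simp: power2_eq_square)
  hence "(Re \<zeta>)^2 < 1" by linarith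
  thus "Re \<zeta> < 1" "Re \<zeta> > -1" by (auto simp: abs_square_less_1 abs_less_iff)
qed

lemma sig_regions:
  fixes \<xi>1 \<xi>2 :: real and \<zeta> :: complex
  assumes s: "\<xi>1 + \<xi>2 = of_int T" and p: "\<xi>1 * \<xi>2 = - ((of_int q)^2)"
    and x1: "\<xi>1 > 1/4" and x2: "\<xi>2 < 0" and z: "\<zeta> \<in> S_set"
  defines "c \<equiv> 1 - 1/(2*\<xi>1)"
  shows "Re \<zeta> > c \<Longrightarrow> tl_signature \<zeta> (Vm T q) = 0"
    and "Re \<zeta> < c \<Longrightarrow> tl_signature \<zeta> (Vm T q) = 2"
proof -
  define u where "u = 2 - 2 * Re \<zeta>"
  have u0: "u > 0" unfolding u_def using S_Re[OF z] by simp
  have sig: "tl_signature \<zeta> (Vm T q) = sgi (rp (u*(1+\<xi>1)) (u^2*\<xi>1 - u)) + sgi (rm (u*(1+\<xi>1)) (u^2*\<xi>1 - u))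
      + (sgi (rp (u*(1+\<xi>2)) (u^2*\<xi>2 - u)) + sgi (rm (u*(1+\<xi>2)) (u^2*\<xi>2 - u)))"
    unfolding tl_Hm u_def by (rule sig_Hm[OF z s p])
  have "u*\<xi>2 < 0" using u0 x2 by (simp add: mult_pos_neg)
  hence "u * (u*\<xi>2 - 1) < 0" using u0 by (simp add: mult_pos_neg)
  moreover have "u^2*\<xi>2 - u = u * (u*\<xi>2 - 1)" by (simp add: power2_eq_square algebra_simps)
  ultimately have P2: "u^2*\<xi>2 - u < 0" by simp
  have S2: "sgi (rp (u*(1+\<xi>2)) (u^2*\<xi>2 - u)) + sgi (rm (u*(1+\<xi>2)) (u^2*\<xi>2 - u)) = 0"
    unfolding rp_def rm_def by (rule quad_neg[OF P2])
  have e: "2 - 2*c = 1/\<xi>1" unfolding c_def by simp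
  have P1: "u^2*\<xi>1 - u = u * (u*\<xi>1 - 1)" by (simp add: power2_eq_square algebra_simps)
  show "Re \<zeta> > c \<Longrightarrow> tl_signature \<zeta> (Vm T q) = 0"
  proof -
    assume "Re \<zeta> > c"
    hence "u < 1/\<xi>1" unfolding u_def using e by linarith
    hence "u*\<xi>1 < 1" using x1 by (simp add: field_simps)
    hence "u^2*\<xi>1 - u < 0" unfolding P1 using u0 by (simp add: mult_pos_neg)
    hence "sgi (rp (u*(1+\<xi>1)) (u^2*\<xi>1 - u)) + sgi (rm (u*(1+\<xi>1)) (u^2*\<xi>1 - u)) = 0"
      unfolding rp_def rm_def by (rule quad_neg)
    thus ?thesis unfolding sig S2 by simp
  qed
  show "Re \<zeta> < c \<Longrightarrow> tl_signature \<zeta> (Vm T q) = 2"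
  proof -
    assume "Re \<zeta> < c"
    hence "u > 1/\<xi>1" unfolding u_def using e by linarith
    hence "u*\<xi>1 > 1" using x1 by (simp add: field_simps)
    hence Pp: "u^2*\<xi>1 - u > 0" unfolding P1 using u0 by simp
    have Bp: "u*(1+\<xi>1) > 0" using u0 x1 by simp
    have "sgi (rp (u*(1+\<xi>1)) (u^2*\<xi>1 - u)) + sgi (rm (u*(1+\<xi>1)) (u^2*\<xi>1 - u)) = 2"
      unfolding rp_def rm_def by (rule quad_pos[OF Pp Bp disc_ok]) (use u0 in simp)
    thus ?thesis unfolding sig S2 by simp
  qed
qed

lemma param_exists:
  fixes m0 \<delta> :: real
  assumes m0: "m0 > 1/4" and d: "\<delta> > 0"
  shows "\<exists>T q \<xi>1 \<xi>2. \<xi>1 + \<xi>2 = of_int T \<and> \<xi>1 * \<xi>2 = - ((of_int q)^2) \<and> \<xi>1 > 1/4 \<and> \<xi>2 < 0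
     \<and> \<bar>\<xi>1 - m0\<bar> < \<delta>"
proof -
  define a where "a = max (m0 - \<delta>/2) ((m0 + 1/4)/2)"
  define b where "b = m0 + \<delta>/2"
  have "(m0 + 1/4)/2 > 1/4" using m0 by simp
  moreover have "a \<ge> (m0+1/4)/2" unfolding a_def by simp
  ultimately have a1: "a > 1/4" by linarith
  have a2: "a < m0" unfolding a_def using m0 d by auto
  have a3: "m0 - a < \<delta>" unfolding a_def using d by auto
  have b1: "b > m0" "b - m0 < \<delta>" unfolding b_def using d by auto
  have ab: "a < b" using a2 b1 by simp
  have a0: "a > 0" using a1 by simp
  have b0: "b > 0" using a0 ab by simp
  define q :: int where "q = \<lceil>a*b/(b-a)\<rceil> + 1"
  have qpos: "a*b/(b-a) > 0" using a0 b0 ab by simp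
  have q1: "real_of_int q > a*b/(b-a)" unfolding q_def by linarith
  have "real_of_int q = real_of_int \<lceil>a*b/(b-a)\<rceil> + 1" unfolding q_def by simp
  hence q2: "real_of_int q \<ge> 1" using qpos le_of_int_ceiling[of "a*b/(b-a)"] by linarith
  have qq: "(real_of_int q)^2 > a*b/(b-a)"
  proof -
    have "real_of_int q \<le> (real_of_int q)^2" using q2 by (simp add: power2_eq_square)
    thus ?thesis using q1 by linarith
  qed
  define Q where "Q = (real_of_int q)^2"
  define T :: int where "T = \<lceil>b - Q/b\<rceil> - 1"
  have T1: "of_int T < b - Q/b" unfolding T_def by linarith
  have T2: "of_int T > a - Q/a"
  proof -
    have "Q * (b - a) > a*b" using qq ab unfolding Q_def by (simp add: field_simps)
    hence "Q/a - Q/b > 1" using a0 b0 by (simp add: field_simps)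
    moreover have "of_int T \<ge> b - Q/b - 1" unfolding T_def by linarith
    ultimately show ?thesis using ab by linarith
  qed
  define r where "r = sqrt ((of_int T)^2 + 4*Q)"
  define \<xi>1 where "\<xi>1 = (of_int T + r)/2"
  define \<xi>2 where "\<xi>2 = (of_int T - r)/2"
  have Q0: "Q > 0" unfolding Q_def using q2 by simp
  have rr: "r^2 = (of_int T)^2 + 4*Q" unfolding r_def using Q0 by (simp add: add_nonneg_pos)
  have r_gt: "r > \<bar>of_int T\<bar>"
  proof -
    have "sqrt ((of_int T)^2) < r" unfolding r_def using Q0 by (intro real_sqrt_less_mono) simp
    thus ?thesis by simp
  qed
  have s: "\<xi>1 + \<xi>2 = of_int T" unfolding \<xi>1_def \<xi>2_def by (simp add: field_simps)
  have p: "\<xi>1 * \<xi>2 = - Q"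
  proof -
    have "\<xi>1 * \<xi>2 = ((of_int T)^2 - r^2)/4" unfolding \<xi>1_def \<xi>2_def by (simp add: field_simps power2_eq_square)
    thus ?thesis unfolding rr by simp
  qed
  have x2: "\<xi>2 < 0" unfolding \<xi>2_def using r_gt by simp
  have f: "y^2 - of_int T * y - Q = (y - \<xi>1) * (y - \<xi>2)" for y
  proof -
    have "(y - \<xi>1) * (y - \<xi>2) = y^2 - (\<xi>1 + \<xi>2) * y + \<xi>1 * \<xi>2" by (simp add: algebra_simps power2_eq_square)
    thus ?thesis unfolding s p by simp
  qed
  have fa: "a^2 - of_int T * a - Q < 0"
  proof -
    have "of_int T * a > (a - Q/a) * a" using T2 a0 by (simp add: mult_strict_right_mono)
    also have "(a - Q/a) * a = a^2 - Q" using a0 by (simp add: field_simps power2_eq_square)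
    finally show ?thesis by simp
  qed
  have fb: "b^2 - of_int T * b - Q > 0"
  proof -
    have "of_int T * b < (b - Q/b) * b" using T1 b0 by (simp add: mult_strict_right_mono)
    also have "(b - Q/b) * b = b^2 - Q" using b0 by (simp add: field_simps power2_eq_square)
    finally show ?thesis by simp
  qed
  have "(a - \<xi>1) * (a - \<xi>2) < 0" using fa unfolding f .
  moreover have "a - \<xi>2 > 0" using a0 x2 by simp
  ultimately have l1: "a < \<xi>1" by (simp add: mult_less_0_iff)
  have "(b - \<xi>1) * (b - \<xi>2) > 0" using fb unfolding f .
  moreover have "b - \<xi>2 > 0" using b0 x2 by simp
  ultimately have l2: "\<xi>1 < b" by (simp add: zero_less_mult_iff)
  have "\<bar>\<xi>1 - m0\<bar> < \<delta>" using l1 l2 a3 b1 by linarith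
  moreover have "\<xi>1 > 1/4" using l1 a1 by simp
  ultimately show ?thesis using s p x2 unfolding Q_def by blast
qed

lemma approx:
  fixes \<omega> :: complex and \<epsilon> :: real
  assumes "\<omega> \<in> S_set" and "\<epsilon> > 0"
  shows "\<exists>m0 \<delta>. m0 > 1/4 \<and> \<delta> > 0 \<and> (\<forall>m. \<bar>m - m0\<bar> < \<delta> \<longrightarrow>
     cmod (Complex (1 - 1/(2*m)) (sqrt (1 - (1 - 1/(2*m))^2)) - \<omega>) < \<epsilon>)"
proof -
  define g where "g m = Complex (1 - 1/(2*m)) (sqrt (1 - (1 - 1/(2*m))^2))" for m :: real
  define m0 where "m0 = 1/(2*(1 - Re \<omega>))"
  have r1: "Re \<omega> < 1" "Re \<omega> > -1" using S_Re[OF assms(1)] by auto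
  have m0p: "m0 > 1/4" unfolding m0_def using r1 by (simp add: field_simps)
  have m00: "m0 \<noteq> 0" using m0p by simp
  have cm: "1 - 1/(2*m0) = Re \<omega>" unfolding m0_def using r1 by (simp add: field_simps)
  have Iw: "Im \<omega> > 0" "cmod \<omega> = 1" using assms(1) unfolding S_set_def by auto
  hence "(Re \<omega>)^2 + (Im \<omega>)^2 = 1" unfolding cmod_def by (simp add: power2_eq_square)
  hence "Im \<omega> = sqrt (1 - (Re \<omega>)^2)" using Iw(1) by (simp add: real_sqrt_unique[symmetric])
  hence g0: "g m0 = \<omega>" unfolding g_def cm by (simp add: complex_eq_iff)
  have "(g \<longlongrightarrow> g m0) (at m0)" unfolding g_def
    by (intro tendsto_Complex tendsto_intros) (use m00 in auto)
  hence "g \<midarrow>m0\<rightarrow> \<omega>" unfolding g0 .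
  from LIM_D[OF this assms(2)] obtain \<delta> where d: "\<delta> > 0" 
    and h: "\<forall>x. x \<noteq> m0 \<and> norm (x - m0) < \<delta> \<longrightarrow> norm (g x - \<omega>) < \<epsilon>" by blast
  have "\<forall>m. \<bar>m - m0\<bar> < \<delta> \<longrightarrow> cmod (g m - \<omega>) < \<epsilon>"
  proof (intro allI impI)
    fix m assume "\<bar>m - m0\<bar> < \<delta>"
    show "cmod (g m - \<omega>) < \<epsilon>"
    proof (cases "m = m0")
      case True thus ?thesis using g0 assms(2) by simp
    next
      case False thus ?thesis using h \<open>\<bar>m - m0\<bar> < \<delta>\<close> by auto
    qed
  qed
  thus ?thesis using m0p d unfolding g_def by blast
qed

theorem mainTheorem5:
  fixes \<omega> :: complex and \<epsilon> :: real
  assumes "\<omega> \<in> S_set" and "\<epsilon> > 0"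
  shows "\<exists>\<omega>' V. \<omega>' \<in> S_set \<and> cmod (\<omega>' - \<omega>) < \<epsilon> \<and> seifert_matrix V \<and>
    (let D = map_poly (of_int :: int \<Rightarrow> complex) (alexander_poly V) in
       {z. poly D z = 0 \<and> Im z \<noteq> 0} = {\<omega>', cnj \<omega>'} \<and>
       order \<omega>' D = 1 \<and> order (cnj \<omega>') D = 1 \<and>
       cmod \<omega>' = 1 \<and> cmod (cnj \<omega>') = 1) \<and>
    (\<forall>\<zeta>\<in>S_set. Re \<zeta> > Re \<omega>' \<longrightarrow> tl_signature \<zeta> V = 0) \<and>
    (\<exists>c. c \<noteq> 0 \<and> (\<forall>\<zeta>\<in>S_set. Re \<zeta> < Re \<omega>' \<longrightarrow> tl_signature \<zeta> V = c))"
proof -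
  obtain m0 \<delta> where m0: "m0 > 1/4" and d: "\<delta> > 0" and
    h: "\<forall>m. \<bar>m - m0\<bar> < \<delta> \<longrightarrow> cmod (Complex (1 - 1/(2*m)) (sqrt (1 - (1 - 1/(2*m))^2)) - \<omega>) < \<epsilon>"
    using approx[OF assms] by blast
  obtain T q \<xi>1 \<xi>2 where s: "\<xi>1 + \<xi>2 = of_int T" and p: "\<xi>1 * \<xi>2 = - ((of_int q)^2)"
    and x1: "\<xi>1 > 1/4" and x2: "\<xi>2 < 0" and cl: "\<bar>\<xi>1 - m0\<bar> < \<delta>"
    using param_exists[OF m0 d] by blast
  define c where "c = 1 - 1/(2*\<xi>1)"
  define w where "w = Complex c (sqrt (1 - c^2))"
  have AP: "{z. poly (map_poly (of_int::int\<Rightarrow>complex) (alexander_poly (Vm T q))) z = 0 \<and> Im z \<noteq> 0} = {w, cnj w} 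
     \<and> order w (map_poly (of_int::int\<Rightarrow>complex) (alexander_poly (Vm T q))) = 1
     \<and> order (cnj w) (map_poly (of_int::int\<Rightarrow>complex) (alexander_poly (Vm T q))) = 1
     \<and> cmod w = 1 \<and> Im w > 0 \<and> Re w = c"
    unfolding w_def c_def by (rule alex_props[OF s p x1 x2])
  have wS: "w \<in> S_set" using AP unfolding S_set_def by auto
  have wc: "cmod (w - \<omega>) < \<epsilon>" using h cl unfolding w_def c_def by blast
  have R1: "\<forall>\<zeta>\<in>S_set. Re \<zeta> > Re w \<longrightarrow> tl_signature \<zeta> (Vm T q) = 0"
    using sig_regions(1)[OF s p x1 x2] AP unfolding c_def by auto
  have R2: "\<forall>\<zeta>\<in>S_set. Re \<zeta> < Re w \<longrightarrow> tl_signature \<zeta> (Vm T q) = 2"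
    using sig_regions(2)[OF s p x1 x2] AP unfolding c_def by auto
  have R2': "\<exists>c. c \<noteq> 0 \<and> (\<forall>\<zeta>\<in>S_set. Re \<zeta> < Re w \<longrightarrow> tl_signature \<zeta> (Vm T q) = c)"
    using R2 by (intro exI[of _ 2]) auto
  have L: "let D = map_poly (of_int :: int \<Rightarrow> complex) (alexander_poly (Vm T q)) in
       {z. poly D z = 0 \<and> Im z \<noteq> 0} = {w, cnj w} \<and>
       order w D = 1 \<and> order (cnj w) D = 1 \<and>
       cmod w = 1 \<and> cmod (cnj w) = 1" unfolding Let_def using AP by simp
  show ?thesis using wS wc seifert_Vm L R1 R2' by blast
qed
end
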